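(* Let $k\ge4$ be an integer and $\eta\in[\eta_{k+1},\eta_k)$. Then $0,1\in\mathrm{co}(V_k)$, where $V_k=\{b_0,z_0,z_1,\dots,z_k,w_1,\dots,w_k\}$.
   Context: For $\eta\in(0,\pi/3)$ let $a=\frac{e^{-i\eta}}{2\cos\eta}$, $c=\frac{1}{1-|a|^4}$, and for integers $j\ge0$ put $z_j=ca^{j+1}$, $w_j=1-c|a|^2a^j$, $b_0=a+c|a|^4$. For integers $k\ge1$ let $\Phi_k(\eta)=(1-|a|^4)\sin((k-1)\eta)-|a|^3\sin((k-2)\eta)+|a|^k\sin\eta$; for each $k\ge4$, $\Phi_k$ has a unique zero in $(\pi/k,\pi/(k-1))$, denoted $\eta_k$. $\mathrm{co}$ denotes convex hull. *)

theory Defs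
  imports "HOL-Analysis.Analysis"
begin

definition aa :: "real \<Rightarrow> complex" where
  "aa \<eta> = exp (- \<i> * complex_of_real \<eta>) / complex_of_real (2 * cos \<eta>)"

definition cc :: "real \<Rightarrow> real" where
  "cc \<eta> = 1 / (1 - cmod (aa \<eta>) ^ 4)"

definition zz :: "real \<Rightarrow> nat \<Rightarrow> complex" where
  "zz \<eta> j = complex_of_real (cc \<eta>) * aa \<eta> ^ (j + 1)"

definition ww :: "real \<Rightarrow> nat \<Rightarrow> complex" where
  "ww \<eta> j = 1 - complex_of_real (cc \<eta> * cmod (aa \<eta>) ^ 2) * aa \<eta> ^ j"

definition b0 :: "real \<Rightarrow> complex" where
  "b0 \<eta> = aa \<eta> + complex_of_real (cc \<eta> * cmod (aa \<eta>) ^ 4)"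

definition Phi :: "nat \<Rightarrow> real \<Rightarrow> real" where
  "Phi k \<eta> = (1 - cmod (aa \<eta>) ^ 4) * sin ((real k - 1) * \<eta>)
             - cmod (aa \<eta>) ^ 3 * sin ((real k - 2) * \<eta>)
             + cmod (aa \<eta>) ^ k * sin \<eta>"

definition eta :: "nat \<Rightarrow> real" where
  "eta k = (THE \<eta>. \<eta> \<in> {pi / real k <..< pi / (real k - 1)} \<and> Phi k \<eta> = 0)"

definition Vk :: "real \<Rightarrow> nat \<Rightarrow> complex set" where
  "Vk \<eta> k = {b0 \<eta>} \<union> zz \<eta> ` {0..k} \<union> ww \<eta> ` {1..k}"

end

theory Submission
  imports Defs
begin

definition RR :: "real \<Rightarrow> real" where "RR x = 1 / (2 * cos x)"

definition ff :: "nat \<Rightarrow> real \<Rightarrow> real" where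
 "ff n x = (1 - RR x ^ 4) * sin ((real n - 1) * x) - RR x ^ 3 * sin ((real n - 2) * x) + RR x ^ n * sin x"

lemma RR_deriv: "cos x \<noteq> 0 \<Longrightarrow> (RR has_real_derivative (2 * RR x ^ 2 * sin x)) (at x)"
  unfolding RR_def
  by (auto intro!: derivative_eq_intros simp: field_simps power2_eq_square)

lemma ff_deriv:
  assumes "cos x \<noteq> 0"
  shows "(ff n has_real_derivative
     (- (4 * RR x ^ 3 * (2 * RR x ^ 2 * sin x)) * sin ((real n - 1) * x)
      + (1 - RR x ^ 4) * (cos ((real n - 1) * x) * (real n - 1))
      - (3 * RR x ^ 2 * (2 * RR x ^ 2 * sin x)) * sin ((real n - 2) * x)
      - RR x ^ 3 * (cos ((real n - 2) * x) * (real n - 2))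
      + real n * RR x ^ (n - 1) * (2 * RR x ^ 2 * sin x) * sin x
      + RR x ^ n * cos x)) (at x)"
proof -
  have R: "(RR has_real_derivative (2 * RR x ^ 2 * sin x)) (at x)" using RR_deriv[OF assms] .
  show ?thesis unfolding ff_def[abs_def]
    apply (rule derivative_eq_intros DERIV_power[OF R] R | rule refl)+
    apply (simp add: algebra_simps)
    done
qed

lemma aux_lin:
  fixes X Y B P Q N1 N2 nn :: real
  assumes "X - Y \<le> B" "B \<le> (nn - 1) * (-(7/10)) * (39/100)" "P \<le> nn/8" "Q \<le> 1/4" "0 \<le> N1" "0 \<le> N2" "5 \<le> nn"
  shows "- N1 + X - N2 - Y + P + Q < 0"
proof -
  have "1000 * B \<le> 273 - 273 * nn" using assms(2) by (simp add: field_simps)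
  moreover have "8 * P \<le> nn" "4 * Q \<le> 1" using assms(3,4) by simp_all
  ultimately show ?thesis using assms(1,5,6,7) by linarith
qed

lemma ff_deriv_neg:
  assumes n: "n \<ge> 5" and x1: "pi / real n \<le> x" and x2: "x \<le> pi / (real n - 1)"
  shows "- (4 * RR x ^ 3 * (2 * RR x ^ 2 * sin x)) * sin ((real n - 1) * x)
      + (1 - RR x ^ 4) * (cos ((real n - 1) * x) * (real n - 1))
      - (3 * RR x ^ 2 * (2 * RR x ^ 2 * sin x)) * sin ((real n - 2) * x)
      - RR x ^ 3 * (cos ((real n - 2) * x) * (real n - 2))
      + real n * RR x ^ (n - 1) * (2 * RR x ^ 2 * sin x) * sin x
      + RR x ^ n * cos x < 0"
proof -
  have nr: "real n \<ge> 5" using n by simp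
  have x0: "0 < x" using x1 nr by (smt (verit) divide_pos_pos pi_gt_zero)
  have "pi / (real n - 1) \<le> pi / 4" using nr by (intro divide_left_mono) auto
  with x2 have x4: "x \<le> pi / 4" by (rule order_trans)
  have c45: "cos x \<ge> sqrt 2 / 2" using cos_monotone_0_pi_le[of x "pi/4"] x0 x4 cos_45 by simp
  have s2: "sqrt 2 / 2 > (7/10)"
  proof -
    have "((7/10)::real) * 2 < sqrt 2" by (rule real_less_rsqrt) (simp add: power2_eq_square)
    thus ?thesis by simp
  qed
  have cpos: "cos x > 0" using c45 s2 by simp
  have sx: "sin x > 0" using sin_gt_zero[of x] x0 x4 pi_gt_zero by simp
  have cc2: "cos x ^ 2 \<ge> 1/2"
  proof -
    have "cos x ^ 2 \<ge> (sqrt 2 / 2) ^ 2" using c45 s2 by (intro power_mono) auto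
    thus ?thesis by (simp add: power_divide)
  qed
  have sin2: "sin x ^ 2 \<le> 1/2" using cc2 sin_cos_squared_add[of x] by linarith
  define R where "R = RR x"
  have Rpos: "R > 0" using cpos by (simp add: R_def RR_def)
  have R2: "R ^ 2 \<le> 1/2"
  proof -
    have "R ^ 2 = 1 / (4 * cos x ^ 2)" by (simp add: R_def RR_def power_divide power_mult_distrib)
    also have "\<dots> \<le> 1 / (4 * (1/2))" using cc2 by (intro divide_left_mono) auto
    finally show ?thesis by simp
  qed
  have R1: "R \<le> 1"
  proof (rule ccontr)
    assume "\<not> R \<le> 1" hence "R^2 > 1" by (simp add: one_less_power)
    with R2 show False by simp
  qed
  have R4: "R ^ 4 \<le> 1/4"
  proof -
    have "R ^ 4 = (R^2)^2" by simp
    also have "\<dots> \<le> (1/2)^2" using R2 Rpos by (intro power_mono) auto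
    finally show ?thesis by (simp add: eval_nat_numeral)
  qed
  have R6: "R ^ 6 \<le> 1/8"
  proof -
    have "R ^ 6 = (R^2)^3" by simp
    also have "\<dots> \<le> (1/2)^3" using R2 Rpos by (intro power_mono) auto
    finally show ?thesis by (simp add: eval_nat_numeral)
  qed
  have R3: "R ^ 3 \<le> (9/25)"
  proof (rule ccontr)
    assume "\<not> R ^ 3 \<le> (9/25)"
    hence "((9/25)::real)^2 < (R^3)^2" by (intro power_strict_mono) auto
    hence "((9/25)::real)^2 < R^6" by (simp add: power_mult[symmetric])
    with R6 show False by (simp add: power2_eq_square)
  qed
  have Rn: "R ^ n \<le> 1/4"
    using power_decreasing[of 4 n R] n Rpos R1 R4 by simp
  have Rn1: "R ^ (n - 1) * R ^ 2 \<le> 1/8"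
  proof -
    have "R ^ (n - 1) * R ^ 2 = R ^ (n + 1)" using n by (simp add: power_add[symmetric])
    also have "\<dots> \<le> R ^ 6" using power_decreasing[of 6 "n+1" R] n Rpos R1 by simp
    finally show ?thesis using R6 by simp
  qed
  define S1 where "S1 = sin ((real n - 1) * x)"
  define S2 where "S2 = sin ((real n - 2) * x)"
  define C1 where "C1 = cos ((real n - 1) * x)"
  define C2 where "C2 = cos ((real n - 2) * x)"
  have a1: "(real n - 1) * x \<ge> pi - pi / real n"
  proof -
    have "(real n - 1) * x \<ge> (real n - 1) * (pi / real n)" using x1 nr by (intro mult_left_mono) auto
    also have "(real n - 1) * (pi / real n) = pi - pi / real n" using nr by (simp add: field_simps)
    finally show ?thesis .
  qed
  have a2: "(real n - 1) * x \<le> pi"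
  proof -
    have "(real n - 1) * x \<le> (real n - 1) * (pi / (real n - 1))" using x2 nr by (intro mult_left_mono) auto
    thus ?thesis using nr by simp
  qed
  have b1: "(real n - 2) * x \<ge> pi / 2"
  proof -
    have "(real n - 2) * x \<ge> (real n - 2) * (pi / real n)" using x1 nr by (intro mult_left_mono) auto
    moreover have "(real n - 2) * (pi / real n) \<ge> pi / 2" using nr pi_gt_zero by (simp add: field_simps)
    ultimately show ?thesis by linarith
  qed
  have b2: "(real n - 2) * x < pi" using a2 x0 by (simp add: algebra_simps)
  have S1p: "S1 \<ge> 0" unfolding S1_def using a2 x0 nr
    by (intro sin_ge_zero) auto
  have S2p: "S2 \<ge> 0" unfolding S2_def using b1 b2 pi_gt_zero
    by (intro sin_ge_zero) auto
  have C2n: "C2 \<le> 0" unfolding C2_def using b1 b2 cos_monotone_0_pi_le[of "pi/2" "(real n - 2) * x"] pi_gt_zero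
    by auto
  have C12: "C1 \<le> C2" unfolding C1_def C2_def using b1 a2 x0 pi_gt_zero nr
    by (intro cos_monotone_0_pi_le) (auto simp: algebra_simps)
  have C1b: "C1 \<le> - (7/10)"
  proof -
    have t1: "pi - (real n - 1) * x \<le> pi / 4"
    proof -
      have "pi / real n \<le> pi / 4" using nr by (intro divide_left_mono) auto
      thus ?thesis using a1 by simp
    qed
    have "cos (pi/4) \<le> cos (pi - (real n - 1) * x)" using t1 a2 pi_gt_zero
      by (intro cos_monotone_0_pi_le) auto
    hence "sqrt 2 / 2 \<le> - C1" by (simp add: C1_def cos_45)
    thus ?thesis using s2 by simp
  qed
  have key1: "(1 - R ^ 4) * (C1 * (real n - 1)) - R ^ 3 * (C2 * (real n - 2))
           \<le> (real n - 1) * C1 * (1 - R^4 - R^3)"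
  proof -
    have "(real n - 2) * (- C2) \<le> (real n - 1) * (- C1)"
      using C12 C2n nr by (intro mult_mono) auto
    hence "R ^ 3 * (C1 * (real n - 1)) \<le> R ^ 3 * (C2 * (real n - 2))"
    proof -
      have "R^3 * ((real n - 1) * C1) \<le> R^3 * ((real n - 2) * C2)"
        using \<open>(real n - 2) * (- C2) \<le> (real n - 1) * (- C1)\<close> Rpos by (intro mult_left_mono) auto
      thus ?thesis by (simp add: algebra_simps)
    qed
    thus ?thesis by (simp add: algebra_simps)
  qed
  have key2: "(real n - 1) * C1 * (1 - R^4 - R^3) \<le> (real n - 1) * (-(7/10)) * (39/100)"
  proof -
    have "(real n - 1) * C1 \<le> (real n - 1) * (-(7/10))" using C1b nr by (intro mult_left_mono) auto
    moreover have "(1 - R^4 - R^3) \<ge> (39/100)" using R3 R4 by simp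
    moreover have "(real n - 1) * C1 \<le> 0" using C1b nr by (simp add: mult_nonneg_nonpos)
    ultimately have "(real n - 1) * C1 * (1 - R^4 - R^3) \<le> (real n - 1) * C1 * (39/100)"
      by (intro mult_left_mono_neg) auto
    also have "\<dots> \<le> (real n - 1) * (-(7/10)) * (39/100)"
      using \<open>(real n - 1) * C1 \<le> (real n - 1) * (-(7/10))\<close> by (intro mult_right_mono) auto
    finally show ?thesis .
  qed
  have key3: "real n * R ^ (n - 1) * (2 * R ^ 2 * sin x) * sin x \<le> real n / 8"
  proof -
    have "real n * R ^ (n - 1) * (2 * R ^ 2 * sin x) * sin x = real n * (R ^ (n - 1) * R ^ 2) * (2 * sin x ^ 2)"
      by (simp add: power2_eq_square algebra_simps)
    also have "\<dots> \<le> real n * (1/8) * 1" using Rn1 sin2 Rpos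
      by (intro mult_mono) auto
    finally show ?thesis by simp
  qed
  have key4: "R ^ n * cos x \<le> 1/4"
  proof -
    have "R ^ n * cos x \<le> R ^ n * 1" using Rpos by (intro mult_left_mono) auto
    thus ?thesis using Rn by simp
  qed
  have neg1: "0 \<le> (4 * R ^ 3 * (2 * R ^ 2 * sin x)) * S1" using Rpos sx S1p by simp
  have neg2: "0 \<le> (3 * R ^ 2 * (2 * R ^ 2 * sin x)) * S2" using Rpos sx S2p by simp
  show ?thesis
    using key1 key2 key3 key4 neg1 neg2 nr
    unfolding R_def[symmetric] S1_def[symmetric] S2_def[symmetric] C1_def[symmetric] C2_def[symmetric]
    by (simp only: minus_mult_left[symmetric]) (rule aux_lin[OF key1 key2 key3 key4 neg1 neg2 nr])
qed

lemma RR_bounds: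
  assumes "0 < x" "x \<le> pi / 4"
  shows "0 < RR x" "RR x ^ 2 \<le> 1/2" "RR x < 1" "2 * RR x * cos x = 1" "0 < cos x" "0 < sin x"
proof -
  have c45: "cos x \<ge> sqrt 2 / 2" using cos_monotone_0_pi_le[of x "pi/4"] assms cos_45 by simp
  have s2: "sqrt 2 / 2 > (7/10::real)"
  proof -
    have "((7/10)::real) * 2 < sqrt 2" by (rule real_less_rsqrt) (simp add: power2_eq_square)
    thus ?thesis by simp
  qed
  show cpos: "cos x > 0" using c45 s2 by simp
  show "0 < sin x" using sin_gt_zero[of x] assms pi_gt_zero by simp
  have cc2: "cos x ^ 2 \<ge> 1/2"
  proof -
    have "cos x ^ 2 \<ge> (sqrt 2 / 2) ^ 2" using c45 s2 by (intro power_mono) auto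
    thus ?thesis by (simp add: power_divide)
  qed
  show Rpos: "RR x > 0" using cpos by (simp add: RR_def)
  show R2: "RR x ^ 2 \<le> 1/2"
  proof -
    have "RR x ^ 2 = 1 / (4 * cos x ^ 2)" by (simp add: RR_def power_divide power_mult_distrib)
    also have "\<dots> \<le> 1 / (4 * (1/2))" using cc2 by (intro divide_left_mono) auto
    finally show ?thesis by simp
  qed
  show "RR x < 1"
  proof (rule ccontr)
    assume "\<not> RR x < 1" hence "RR x^2 \<ge> 1" by (simp add: one_le_power)
    with R2 show False by simp
  qed
  show "2 * RR x * cos x = 1" using cpos by (simp add: RR_def)
qed

lemma Phi_ff: "cos x > 0 \<Longrightarrow> Phi n x = ff n x"
proof -
  assume c: "cos x > 0"
  have "cmod (aa x) = RR x"
    using c by (simp add: aa_def RR_def norm_divide norm_mult)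
  thus ?thesis by (simp add: Phi_def ff_def)
qed

lemma ff_left:
  assumes n: "n \<ge> 5"
  shows "ff n (pi / real n) > 0"
proof -
  define a where "a = pi / real n"
  have nr: "real n \<ge> 5" using n by simp
  have a0: "0 < a" using nr by (simp add: a_def)
  have a4: "a \<le> pi / 4" unfolding a_def using nr by (intro divide_left_mono) auto
  note B = RR_bounds[OF a0 a4]
  have e1: "sin ((real n - 1) * a) = sin a"
  proof -
    have "(real n - 1) * a = pi - a" using nr by (simp add: a_def field_simps)
    thus ?thesis by simp
  qed
  have e2: "sin ((real n - 2) * a) = 2 * sin a * cos a"
  proof -
    have "(real n - 2) * a = pi - 2 * a" using nr by (simp add: a_def field_simps)
    thus ?thesis by (simp add: sin_double)
  qed
  have "ff n a = sin a * (1 - RR a ^ 4 - RR a ^ 2 * (2 * RR a * cos a) + RR a ^ n)"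
    unfolding ff_def e1 e2 by (simp add: algebra_simps power2_eq_square power3_eq_cube)
  also have "\<dots> = sin a * (1 - RR a ^ 4 - RR a ^ 2 + RR a ^ n)" using B(4) by simp
  also have "\<dots> > 0"
  proof -
    have "RR a ^ 4 \<le> 1/4"
    proof -
      have "RR a ^ 4 = (RR a^2)^2" by simp
      also have "\<dots> \<le> (1/2)^2" using B by (intro power_mono) auto
      finally show ?thesis by (simp add: eval_nat_numeral)
    qed
    moreover have "RR a ^ n \<ge> 0" using B by simp
    ultimately have "0 < 1 - RR a ^ 4 - RR a ^ 2 + RR a ^ n" using B(2) by linarith
    thus ?thesis using B by (intro mult_pos_pos) auto
  qed
  finally show ?thesis by (simp add: a_def)
qed

lemma ff_right:
  assumes n: "n \<ge> 5"
  shows "ff n (pi / (real n - 1)) < 0"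
proof -
  define b where "b = pi / (real n - 1)"
  have nr: "real n \<ge> 5" using n by simp
  have b0: "0 < b" using nr by (simp add: b_def)
  have b4: "b \<le> pi / 4" unfolding b_def using nr by (intro divide_left_mono) auto
  note B = RR_bounds[OF b0 b4]
  have e1: "sin ((real n - 1) * b) = 0"
  proof -
    have "(real n - 1) * b = pi" using nr by (simp add: b_def field_simps)
    thus ?thesis by simp
  qed
  have e2: "sin ((real n - 2) * b) = sin b"
  proof -
    have "(real n - 2) * b = pi - b" using nr by (simp add: b_def field_simps)
    thus ?thesis by simp
  qed
  have "ff n b = sin b * (RR b ^ n - RR b ^ 3)"
    unfolding ff_def e1 e2 by (simp add: algebra_simps)
  also have "\<dots> < 0"
  proof -
    have "RR b ^ n < RR b ^ 3" using B n by (intro power_strict_decreasing) auto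
    thus ?thesis using B by (simp add: mult_pos_neg)
  qed
  finally show ?thesis by (simp add: b_def)
qed

lemma ff_has_deriv_neg:
  assumes n: "n \<ge> 5" and x1: "pi / real n \<le> x" and x2: "x \<le> pi / (real n - 1)"
  shows "\<exists>y. (ff n has_real_derivative y) (at x) \<and> y < 0"
proof -
  have nr: "real n \<ge> 5" using n by simp
  have x0: "0 < x" using x1 nr by (smt (verit) divide_pos_pos pi_gt_zero)
  have "pi / (real n - 1) \<le> pi / 4" using nr by (intro divide_left_mono) auto
  with x2 have x4: "x \<le> pi / 4" by (rule order_trans)
  have "cos x \<noteq> 0" using RR_bounds(5)[OF x0 x4] by simp
  thus ?thesis using ff_deriv[of x n] ff_deriv_neg[OF n x1 x2] by blast
qed

lemma eta_prop:
  assumes n: "n \<ge> 5"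
  shows "pi / real n < eta n \<and> eta n < pi / (real n - 1) \<and> Phi n (eta n) = 0"
proof -
  define a where "a = pi / real n"
  define b where "b = pi / (real n - 1)"
  have nr: "real n \<ge> 5" using n by simp
  have ab: "a < b" unfolding a_def b_def using nr by (intro divide_strict_left_mono) auto
  have a0: "0 < a" using nr by (simp add: a_def)
  have b4: "b \<le> pi / 4" unfolding b_def using nr by (intro divide_left_mono) auto
  have cosp: "cos x > 0" if "a \<le> x" "x \<le> b" for x
    using RR_bounds(5)[of x] that a0 b4 by simp
  have cont: "continuous_on {a..b} (ff n)"
  proof (rule continuous_at_imp_continuous_on, rule ballI)
    fix x assume "x \<in> {a..b}"
    hence "cos x \<noteq> 0" using cosp by force
    thus "isCont (ff n) x" using ff_deriv[of x n] DERIV_isCont by blast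
  qed
  obtain x where x: "a \<le> x" "x \<le> b" "ff n x = 0"
    using IVT2'[of "ff n" b 0 a] ff_left[OF n] ff_right[OF n] ab cont
    unfolding a_def b_def by force
  have xa: "x \<noteq> a" using x ff_left[OF n] unfolding a_def by auto
  have xb: "x \<noteq> b" using x ff_right[OF n] unfolding b_def by auto
  have P: "x \<in> {pi / real n <..< pi / (real n - 1)} \<and> Phi n x = 0"
    using x xa xb Phi_ff[of x n] cosp[of x] unfolding a_def b_def by auto
  have U: "y = x" if "y \<in> {pi / real n <..< pi / (real n - 1)} \<and> Phi n y = 0" for y
  proof -
    have ya: "a < y" "y < b" using that unfolding a_def b_def by auto
    have fy: "ff n y = 0" using that Phi_ff[of y n] cosp[of y] ya by auto
    show ?thesis
    proof (rule ccontr)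
      assume "y \<noteq> x"
      then consider "x < y" | "y < x" by linarith
      thus False
      proof cases
        case 1
        have "ff n y < ff n x"
          by (rule DERIV_neg_imp_decreasing[OF 1]) (use ff_has_deriv_neg[OF n] x ya 1 in \<open>auto simp: a_def b_def\<close>)
        thus False using fy x by simp
      next
        case 2
        have "ff n x < ff n y"
          by (rule DERIV_neg_imp_decreasing[OF 2]) (use ff_has_deriv_neg[OF n] x ya 2 in \<open>auto simp: a_def b_def\<close>)
        thus False using fy x by simp
      qed
    qed
  qed
  have "eta n = x" unfolding eta_def by (rule the_equality, rule P, rule U, assumption)
  thus ?thesis using P by simp
qed

lemma cross_real:
  fixes p q :: complex
  assumes "Im p < 0" "0 \<le> Im q"
  shows "complex_of_real ((Re p * Im q - Im p * Re q) / (Im q - Im p)) \<in> closed_segment p q"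
proof -
  define d where "d = Im q - Im p"
  define u where "u = - Im p / d"
  have d: "d > 0" using assms by (simp add: d_def)
  have u01: "0 \<le> u" "u \<le> 1" using assms d by (auto simp: u_def d_def field_simps)
  have u1: "1 - u = Im q / d" using d by (simp add: u_def d_def field_simps)
  have "Re ((1 - u) *\<^sub>R p + u *\<^sub>R q) = (Re p * Im q - Im p * Re q) / d"
    unfolding u1 using d by (simp add: u_def field_simps)
  moreover have "Im ((1 - u) *\<^sub>R p + u *\<^sub>R q) = 0"
    unfolding u1 using d by (simp add: u_def field_simps)
  ultimately have "complex_of_real ((Re p * Im q - Im p * Re q) / (Im q - Im p)) = (1 - u) *\<^sub>R p + u *\<^sub>R q"
    by (simp add: complex_eq_iff d_def)
  thus ?thesis using u01 unfolding closed_segment_def by blast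
qed

lemma real_in_seg:
  fixes v t X :: real
  assumes "v \<le> t" "t \<le> X" "v < X"
  shows "complex_of_real t \<in> closed_segment (complex_of_real v) (complex_of_real X)"
proof -
  define u where "u = (t - v) / (X - v)"
  have u01: "0 \<le> u" "u \<le> 1" using assms by (auto simp: u_def field_simps)
  have u1: "1 - u = (X - t) / (X - v)" using assms by (simp add: u_def field_simps)
  have "u * (X - v) = t - v" using assms by (simp add: u_def)
  hence "(1 - u) * v + u * X = t" by (simp add: algebra_simps)
  hence "complex_of_real t = (1 - u) *\<^sub>R complex_of_real v + u *\<^sub>R complex_of_real X"
    by (simp add: complex_eq_iff)
  thus ?thesis using u01 unfolding closed_segment_def by blast
qed

lemma aa_pow:
  assumes "cos x > 0"
  shows "aa x ^ j = complex_of_real (RR x ^ j) * cis (- (real j * x))"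
proof -
  have "aa x = complex_of_real (RR x) * cis (- x)"
    using assms by (simp add: aa_def RR_def cis_conv_exp field_simps)
  hence "aa x ^ j = complex_of_real (RR x) ^ j * cis (- x) ^ j" by (simp add: power_mult_distrib)
  also have "\<dots> = complex_of_real (RR x ^ j) * cis (- (real j * x))" using Complex.DeMoivre[of "-x" j] by (simp add: of_real_power)
  finally show ?thesis .
qed

lemma Re_aa_pow: "cos x > 0 \<Longrightarrow> Re (aa x ^ j) = RR x ^ j * cos (real j * x)"
  by (simp add: aa_pow)
lemma Im_aa_pow: "cos x > 0 \<Longrightarrow> Im (aa x ^ j) = - (RR x ^ j * sin (real j * x))"
  by (simp add: aa_pow)

lemma cmod_aa: "cos x > 0 \<Longrightarrow> cmod (aa x) = RR x"
  by (simp add: aa_def RR_def norm_divide norm_mult)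

lemma Re_zz: "cos x > 0 \<Longrightarrow> Re (zz x j) = cc x * (RR x ^ (j+1) * cos (real (j+1) * x))"
  unfolding zz_def by (subst aa_pow[of x "j+1"], assumption) (simp del: of_nat_Suc power_Suc)
lemma Im_zz: "cos x > 0 \<Longrightarrow> Im (zz x j) = - (cc x * (RR x ^ (j+1) * sin (real (j+1) * x)))"
  unfolding zz_def by (subst aa_pow[of x "j+1"], assumption) (simp del: of_nat_Suc power_Suc)
lemma Re_ww: "cos x > 0 \<Longrightarrow> Re (ww x j) = 1 - cc x * RR x ^ 2 * (RR x ^ j * cos (real j * x))"
  by (simp add: ww_def Re_aa_pow cmod_aa)
lemma Im_ww: "cos x > 0 \<Longrightarrow> Im (ww x j) = cc x * RR x ^ 2 * (RR x ^ j * sin (real j * x))"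
  by (simp add: ww_def Im_aa_pow cmod_aa)
lemma Re_b0: "cos x > 0 \<Longrightarrow> Re (b0 x) = RR x * cos x + cc x * RR x ^ 4"
  using Re_aa_pow[of x 1] by (simp add: b0_def cmod_aa)
lemma Im_b0: "cos x > 0 \<Longrightarrow> Im (b0 x) = - (RR x * sin x)"
  using Im_aa_pow[of x 1] by (simp add: b0_def)

theorem lemma6p3:
  fixes k :: nat and \<eta> :: real
  assumes "k \<ge> 4"
    and "0 < \<eta>" and "\<eta> < pi / 3"
    and "eta (k + 1) \<le> \<eta>" and "\<eta> < eta k"
  shows "0 \<in> convex hull (Vk \<eta> k) \<and> 1 \<in> convex hull (Vk \<eta> k)"
proof -
  have n5: "k + 1 \<ge> 5" using assms(1) by simp
  from eta_prop[OF n5] have "pi / real (k+1) < eta (k+1)" by blast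
  with assms(4) have "pi / real (k+1) < \<eta>" by linarith
  hence lb: "pi < real (k+1) * \<eta>" by (simp add: divide_less_eq mult.commute)
  have e0: "0 < \<eta>" using assms(2) .
  have e3: "\<eta> < pi / 3" using assms(3) .
  have ch: "cos \<eta> > 1/2"
    using cos_monotone_0_pi[of \<eta> "pi/3"] e0 e3 cos_60 pi_gt_zero by simp
  have cpos: "cos \<eta> > 0" using ch by simp
  define r where "r = RR \<eta>"
  have rpos: "r > 0" using cpos by (simp add: r_def RR_def)
  have rc: "r * cos \<eta> = 1/2" using cpos by (simp add: r_def RR_def)
  have r1: "r < 1"
  proof -
    have "r * cos \<eta> < 1 * cos \<eta>" using rc ch by linarith
    thus ?thesis by (rule mult_right_less_imp_less) (use cpos in auto)
  qed
  have r4: "r ^ 4 < 1" using rpos r1 by (simp add: power_less_one_iff)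
  define c where "c = cc \<eta>"
  have c_eq: "c = 1 / (1 - r ^ 4)" using cpos by (simp add: c_def cc_def cmod_aa r_def)
  have cpos': "c > 0" using c_eq r4 by simp
  have se: "sin \<eta> > 0" using e0 e3 pi_gt_zero by (intro sin_gt_zero) auto
  obtain m :: nat where m1: "1 \<le> m" and mk: "m \<le> k" and mlt: "real m * \<eta> < pi"
    and mge: "pi \<le> (real m + 1) * \<eta>"
  proof -
    define N where "N = nat \<lceil>pi / \<eta>\<rceil>"
    have q3: "pi / \<eta> > 3" using e3 e0 by (simp add: field_simps)
    have qk: "pi / \<eta> < real (k+1)" using lb e0 by (simp add: field_simps)
    have c1: "real N \<ge> pi / \<eta>" unfolding N_def using q3 by linarith
    have c2: "real N < pi / \<eta> + 1" unfolding N_def using q3 by linarith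
    have N4: "N \<ge> 4" using c1 c2 q3 unfolding N_def by linarith
    have Nk: "N \<le> k + 1" unfolding N_def using qk q3 by (simp add: ceiling_le_iff nat_le_iff)
    have "real (N - 1) = real N - 1" using N4 by simp
    hence A: "real (N - 1) * \<eta> < pi" using c2 e0 by (simp add: field_simps)
    have B: "pi \<le> (real (N - 1) + 1) * \<eta>" using c1 e0 N4 by (simp add: field_simps)
    show ?thesis using that[of "N - 1"] A B N4 Nk by simp
  qed
  have mpos: "real m * \<eta> > 0" using m1 e0 by simp
  have m2: "(real m + 1) * \<eta> < 2 * pi" using mlt e3 e0 pi_gt_zero by (simp add: algebra_simps)
  have s1: "sin (real m * \<eta>) > 0" using mpos mlt by (intro sin_gt_zero)
  have s2: "sin ((real m + 1) * \<eta>) \<le> 0" using mge m2 by (intro sin_le_zero)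
  have tht: "pi - real m * \<eta> \<le> \<eta>" using mge by (simp add: algebra_simps)
  have c1n: "cos (real m * \<eta>) < 0"
  proof -
    have "real m * \<eta> > pi / 2" using tht e3 pi_gt_zero by linarith
    thus ?thesis using mlt by (intro cos_lt_zero_pi) auto
  qed
  have s1le: "sin (real m * \<eta>) \<le> sin \<eta>"
  proof -
    have "sin (pi - real m * \<eta>) \<le> sin \<eta>"
      using tht mlt e3 pi_gt_zero by (intro sin_monotone_2pi_le) auto
    thus ?thesis by simp
  qed
  have c1le: "- cos (real m * \<eta>) \<ge> cos \<eta>"
  proof -
    have "cos \<eta> \<le> cos (pi - real m * \<eta>)"
      using tht mlt e3 pi_gt_zero by (intro cos_monotone_0_pi_le) auto
    thus ?thesis by simp
  qed
  have sdiff: "sin (real m * \<eta>) * cos ((real m + 1) * \<eta>) - cos (real m * \<eta>) * sin ((real m + 1) * \<eta>) = - sin \<eta>"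
  proof -
    have "sin (real m * \<eta> - (real m + 1) * \<eta>) = - sin \<eta>" by (simp add: algebra_simps)
    thus ?thesis by (simp add: sin_diff)
  qed
  define p where "p = zz \<eta> (m - 1)"
  define q where "q = zz \<eta> m"
  have mm: "m - 1 + 1 = m" using m1 by simp
  have Rep: "Re p = c * (r ^ m * cos (real m * \<eta>))"
    using Re_zz[OF cpos, of "m-1", unfolded mm] by (simp add: p_def c_def r_def)
  have Imp: "Im p = - (c * (r ^ m * sin (real m * \<eta>)))"
    using Im_zz[OF cpos, of "m-1", unfolded mm] by (simp add: p_def c_def r_def)
  have Req: "Re q = c * (r ^ (m+1) * cos ((real m + 1) * \<eta>))"
    using Re_zz[OF cpos, of m] by (simp add: q_def c_def r_def add.commute)
  have Imq: "Im q = - (c * (r ^ (m+1) * sin ((real m + 1) * \<eta>)))"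
    using Im_zz[OF cpos, of m] by (simp add: q_def c_def r_def add.commute)
  have Imp_neg: "Im p < 0" unfolding Imp using cpos' rpos s1 by simp
  have Imq_nn: "0 \<le> Im q" unfolding Imq using cpos' rpos s2 by (simp add: mult_nonneg_nonpos)
  define v where "v = (Re p * Im q - Im p * Re q) / (Im q - Im p)"
  have vseg: "complex_of_real v \<in> closed_segment p q"
    unfolding v_def by (rule cross_real[OF Imp_neg Imq_nn])
  have vneg: "v < 0"
  proof -
    have "Re p * Im q - Im p * Re q = (c * c * r ^ m * r ^ (m+1)) *
       (sin (real m * \<eta>) * cos ((real m + 1) * \<eta>) - cos (real m * \<eta>) * sin ((real m + 1) * \<eta>))"
      unfolding Rep Imp Req Imq by (simp add: algebra_simps)
    also have "\<dots> = - ((c * c * r ^ m * r ^ (m+1)) * sin \<eta>)" unfolding sdiff by simp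
    finally have "Re p * Im q - Im p * Re q < 0" using cpos' rpos se by simp
    moreover have "Im q - Im p > 0" using Imp_neg Imq_nn by simp
    ultimately show ?thesis unfolding v_def by (simp add: divide_neg_pos)
  qed
  define p' where "p' = b0 \<eta>"
  define q' where "q' = ww \<eta> m"
  have Rep': "Re p' = r * cos \<eta> + c * r ^ 4" using Re_b0[OF cpos] by (simp add: p'_def c_def r_def)
  have Imp': "Im p' = - (r * sin \<eta>)" using Im_b0[OF cpos] by (simp add: p'_def r_def)
  have Req': "Re q' = 1 - c * r ^ 2 * (r ^ m * cos (real m * \<eta>))"
    using Re_ww[OF cpos, of m] by (simp add: q'_def c_def r_def)
  have Imq': "Im q' = c * r ^ 2 * (r ^ m * sin (real m * \<eta>))"
    using Im_ww[OF cpos, of m] by (simp add: q'_def c_def r_def)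
  have Imp'_neg: "Im p' < 0" unfolding Imp' using rpos se by simp
  have Imq'_nn: "0 \<le> Im q'" unfolding Imq' using cpos' rpos s1 by simp
  define X where "X = (Re p' * Im q' - Im p' * Re q') / (Im q' - Im p')"
  have Xseg: "complex_of_real X \<in> closed_segment p' q'"
    unfolding X_def by (rule cross_real[OF Imp'_neg Imq'_nn])
  define Bk where "Bk = (c * r ^ 4 - 1/2) * sin (real m * \<eta>) - r * sin \<eta> * cos (real m * \<eta>)"
  have Bk_pos: "Bk > 0"
  proof (cases "c * r ^ 4 \<ge> 1/2")
    case True
    have "(c * r ^ 4 - 1/2) * sin (real m * \<eta>) \<ge> 0" using True s1 by simp
    moreover have "r * sin \<eta> * cos (real m * \<eta>) < 0" using rpos se c1n by (simp add: mult_pos_neg)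
    ultimately show ?thesis unfolding Bk_def by linarith
  next
    case False
    have f1: "(c * r ^ 4 - 1/2) * sin (real m * \<eta>) \<ge> (c * r ^ 4 - 1/2) * sin \<eta>"
      using False s1le by (intro mult_left_mono_neg) auto
    have "r * sin \<eta> * (- cos (real m * \<eta>)) \<ge> r * sin \<eta> * cos \<eta>"
      using c1le rpos se by (intro mult_left_mono) auto
    hence f2: "- (r * sin \<eta> * cos (real m * \<eta>)) \<ge> r * sin \<eta> * cos \<eta>" by simp
    have "r * sin \<eta> * cos \<eta> = (r * cos \<eta>) * sin \<eta>" by (simp add: algebra_simps)
    hence f3: "r * sin \<eta> * cos \<eta> = sin \<eta> / 2" using rc by simp
    have f4: "(c * r ^ 4 - 1/2) * sin \<eta> = c * r ^ 4 * sin \<eta> - sin \<eta> / 2" by (simp add: algebra_simps)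
    have f5: "c * r ^ 4 * sin \<eta> > 0" using cpos' rpos se by simp
    show ?thesis unfolding Bk_def using f1 f2 f3 f4 f5 by linarith
  qed
  have Xgt: "X > 1"
  proof -
    have D: "Im q' - Im p' > 0" using Imp'_neg Imq'_nn by simp
    have "(Re p' * Im q' - Im p' * Re q') - (Im q' - Im p') = (c * r ^ 2 * r ^ m) * Bk"
    proof -
      have Rep2: "Re p' = 1/2 + c * r ^ 4" using Rep' rc by simp
      show ?thesis unfolding Rep2 Imp' Req' Imq' Bk_def by (simp add: algebra_simps eval_nat_numeral)
    qed
    also have "\<dots> > 0" using cpos' rpos Bk_pos by simp
    finally have "Re p' * Im q' - Im p' * Re q' > Im q' - Im p'" by simp
    thus ?thesis unfolding X_def using D by (simp add: less_divide_eq)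
  qed
  define H where "H = convex hull (Vk \<eta> k)"
  have cH: "convex H" unfolding H_def by simp
  have VH: "Vk \<eta> k \<subseteq> H" unfolding H_def by (rule hull_subset)
  have inH: "p \<in> H" "q \<in> H" "p' \<in> H" "q' \<in> H"
    using VH m1 mk unfolding p_def q_def p'_def q'_def Vk_def by auto
  have vH: "complex_of_real v \<in> H"
    using cH inH vseg unfolding convex_contains_segment by blast
  have XH: "complex_of_real X \<in> H"
    using cH inH Xseg unfolding convex_contains_segment by blast
  have sub: "closed_segment (complex_of_real v) (complex_of_real X) \<subseteq> H"
    using cH vH XH unfolding convex_contains_segment by blast
  have "complex_of_real 0 \<in> closed_segment (complex_of_real v) (complex_of_real X)"
    using vneg Xgt by (intro real_in_seg) auto
  moreover have "complex_of_real 1 \<in> closed_segment (complex_of_real v) (complex_of_real X)"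
    using vneg Xgt by (intro real_in_seg) auto
  ultimately show ?thesis using sub unfolding H_def by auto
qed

end
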